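(* Let $p>2$ be a prime and let $\mathrm{GF}(p)=\{0,1,\dots,p-1\}$ be the prime field. Let $J\ge 1$ and let $C_1,\dots,C_J$ be $J$ pairwise disjoint additive inverse element pairs (AIEPs) over $\mathrm{GF}(p)$, i.e. $C_i=(a_i,\,p-a_i)$ with $a_i\in\mathrm{GF}(p)\setminus\{0\}$ and the sets $\{a_i,p-a_i\}$, $1\le i\le J$, pairwise disjoint. Consider the Cartesian product $\Psi=C_1\times C_2\times\cdots\times C_J$, whose elements (codewords) are the $2^J$ tuples $(u_1,\dots,u_J)$ with $u_i\in\{a_i,p-a_i\}$. Then $\Psi$ is a $J$-user uniquely decodable AIEP (UD-AIEP) code, i.e. the map $(u_1,\dots,u_J)\mapsto \bigoplus_{i=1}^J u_i$ (sum modulo $p$) is injective on $\Psi$, if and only if the finite-field sum-patterns $\bigoplus_{i=1}^J u_i$ of all $2^J$ codewords of $\Psi$ are pairwise distinct nonzero elements of $\mathrm{GF}(p)$; and in that case $J\le \log_2(p-1)$.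
   Context: An additive inverse element pair (AIEP) over $\mathrm{GF}(p)$ is an ordered pair $(j,p-j)$ consisting of a nonzero element $j$ and its additive inverse $p-j$; since $p>2$, $j\neq p-j$. For a tuple $(u_1,\dots,u_J)$ of field elements, its finite-field sum-pattern (FFSP) is the modulo-$p$ sum $\bigoplus_{i=1}^J u_i\in\mathrm{GF}(p)$. The Cartesian product $C_1\times\cdots\times C_J$ is said to have the unique sum-pattern mapping (USPM) property, and is then called a $J$-user UD-AIEP code, if distinct tuples in it have distinct FFSPs. *)

theory Defs
  imports Complex_Main "HOL-Computational_Algebra.Primes" "HOL-Library.FuncSet"
begin

text \<open>GF(p) is modelled as {0..<p} :: nat set with arithmetic mod p.
  The AIEP C_i is (a_i, p - a_i); a codeword of C_1 x ... x C_J is a function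
  u on the index set {1..J} (extensional, i.e. undefined outside) with
  u i \<in> {a i, p - a i}.\<close>

definition AIEP_set :: "nat \<Rightarrow> nat \<Rightarrow> nat set" where
  "AIEP_set p j = {j, p - j}"

definition codewords :: "nat \<Rightarrow> nat \<Rightarrow> (nat \<Rightarrow> nat) \<Rightarrow> (nat \<Rightarrow> nat) set" where
  "codewords p J a = PiE {1..J} (\<lambda>i. AIEP_set p (a i))"

definition ffsp :: "nat \<Rightarrow> nat \<Rightarrow> (nat \<Rightarrow> nat) \<Rightarrow> nat" where
  "ffsp p J u = (\<Sum>i=1..J. u i) mod p"

definition UD_AIEP :: "nat \<Rightarrow> nat \<Rightarrow> (nat \<Rightarrow> nat) \<Rightarrow> bool" where
  "UD_AIEP p J a = inj_on (ffsp p J) (codewords p J a)"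

end

theory Submission
  imports Defs
begin

theorem theorem1:
  fixes p J :: nat and a :: "nat \<Rightarrow> nat"
  assumes "prime p" and "p > 2" and "J \<ge> 1"
    and "\<forall>i\<in>{1..J}. 0 < a i \<and> a i < p"
    and "\<forall>i\<in>{1..J}. \<forall>j\<in>{1..J}. i \<noteq> j \<longrightarrow> AIEP_set p (a i) \<inter> AIEP_set p (a j) = {}"
  shows "(UD_AIEP p J a \<longleftrightarrow>
            (inj_on (ffsp p J) (codewords p J a) \<and> (\<forall>u\<in>codewords p J a. ffsp p J u \<noteq> 0)))
         \<and> (UD_AIEP p J a \<longrightarrow> real J \<le> log 2 (real p - 1))"
proof -
  have oddp: "odd p" using assms(1,2) prime_odd_nat by blast
  have mem: "u i = a i \<or> u i = p - a i" if "u \<in> codewords p J a" "i \<in> {1..J}" for u i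
    using that unfolding codewords_def AIEP_set_def by (auto simp: PiE_iff)
  have nz: "\<forall>u\<in>codewords p J a. ffsp p J u \<noteq> 0" if ud: "UD_AIEP p J a"
  proof (rule ccontr)
    assume "\<not> ?thesis"
    then obtain u where u: "u \<in> codewords p J a" and z: "ffsp p J u = 0" by auto
    define v where "v = restrict (\<lambda>i. p - u i) {1..J}"
    have ule: "u i \<le> p" if "i \<in> {1..J}" for i using mem[OF u that] assms(4) that by fastforce
    have v: "v \<in> codewords p J a"
      unfolding codewords_def AIEP_set_def v_def PiE_iff
    proof (intro conjI ballI)
      fix i assume i: "i \<in> {1..J}"
      show "(\<lambda>i\<in>{1..J}. p - u i) i \<in> {a i, p - a i}"
      proof -
        have "0 < a i \<and> a i < p" using assms(4) i by blast
        thus ?thesis using mem[OF u i] i by auto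
      qed
    qed auto
    have "(\<Sum>i=1..J. v i) + (\<Sum>i=1..J. u i) = (\<Sum>i=1..J. p)"
      unfolding sum.distrib[symmetric] by (rule sum.cong) (auto simp: v_def ule)
    hence "p dvd (\<Sum>i=1..J. v i) + (\<Sum>i=1..J. u i)" by simp
    moreover have "p dvd (\<Sum>i=1..J. u i)" using z unfolding ffsp_def by auto
    ultimately have "p dvd (\<Sum>i=1..J. v i)" using dvd_add_left_iff by blast
    hence fv: "ffsp p J v = 0" unfolding ffsp_def by auto
    have "1 \<in> {1..J}" using assms(3) by auto
    hence "v 1 \<noteq> u 1" using ule[of 1] oddp unfolding v_def by auto presburger
    hence "v \<noteq> u" by auto
    moreover have "v = u" using inj_onD[of "ffsp p J" "codewords p J a" v u] ud u v fv z unfolding UD_AIEP_def by simp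
    ultimately show False by simp
  qed
  have bound: "real J \<le> log 2 (real p - 1)" if ud: "UD_AIEP p J a"
  proof -
    have c2: "card (AIEP_set p (a i)) = 2" if "i \<in> {1..J}" for i
    proof -
      have "0 < a i \<and> a i < p" using assms(4) that by blast
      have "a i \<noteq> p - a i"
      proof
        assume "a i = p - a i"
        hence "p = 2 * a i" using \<open>0 < a i \<and> a i < p\<close> by linarith
        thus False using oddp by simp
      qed
      thus ?thesis unfolding AIEP_set_def by simp
    qed
    have "card (codewords p J a) = 2 ^ J"
      unfolding codewords_def by (simp add: card_PiE c2)
    moreover have "card (ffsp p J ` codewords p J a) = card (codewords p J a)"
      using ud unfolding UD_AIEP_def by (simp add: card_image)
    moreover have "ffsp p J ` codewords p J a \<subseteq> {1..<p}"
      using nz[OF ud] assms(2) unfolding ffsp_def by auto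
    ultimately have "2 ^ J \<le> card {1..<p}"
      by (metis card_mono finite_atLeastLessThan)
    hence "2 ^ J \<le> p - 1" by simp
    hence "real (2 ^ J) \<le> real (p - 1)" by linarith
    hence "(2::real) ^ J \<le> real p - 1" using assms(2) by (simp add: of_nat_diff)
    moreover have "real p - 1 > 0" using assms(2) by simp
    ultimately show ?thesis by (simp add: le_log_iff powr_realpow)
  qed
  show ?thesis using nz bound unfolding UD_AIEP_def by blast
qed

end
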